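(* Let $H_\alpha=-\Delta_\alpha+V$ be the Schrödinger operator with periodic magnetic potential $\alpha$ and periodic electric potential $V$ on a periodic graph $\mathcal G$. Fix a basis $\{\mathbf c_1,\dots,\mathbf c_\beta\}$ of the cycle space of $\mathcal G_*$ such that $\tau(\mathbf c_1),\dots,\tau(\mathbf c_d)$ is the standard basis of $\mathbb Z^d$ and $\{\mathbf c_{d+1},\dots,\mathbf c_\beta\}$ is a basis of the space $\mathcal C^0$ of cycles of $\mathcal G_*$ with zero index, let $\mathcal P$ be the associated projection (see context), and put $k_o=-(\alpha(\mathbf c_1),\dots,\alpha(\mathbf c_d))$. (i) For every $n\in\mathbb N$ and $\tilde k\in\mathbb T^d$, $$\operatorname{Tr}H_\alpha^n(\tilde k+k_o)=\sum_{\mathbf c\in\widetilde{\mathcal C}_n}\omega(\mathbf c)e^{-i\phi_o(\mathbf c,\tilde k)}=\sum_{\mathbf c\in\widetilde{\mathcal C}_n}\omega(\mathbf c)\cos\phi_o(\mathbf c,\tilde k),\qquad \phi_o(\mathbf c,\tilde k)=\alpha(\mathcal P\mathbf c)+\langle\tau(\mathbf c),\tilde k\rangle,$$ or, in Fourier form, $\operatorname{Tr}H_\alpha^n(\tilde k+k_o)=\sum_{\mathrm m\in\mathbb Z^d,\|\mathrm m\|\le n\tau_+}\mathcal T^o_{\alpha,n,\mathrm m}e^{-i\langle\mathrm m,\tilde k\rangle}$ with $\mathcal T^o_{\alpha,n,\mathrm m}=\sum_{\mathbf c\in\widetilde{\mathcal C}_n^{\mathrm m}}\omega(\mathbf c)e^{-i\alpha(\mathcal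 P\mathbf c)}$, where $\tau_+=\max_{\mathbf e\in\mathcal A_*}\|\tau(\mathbf e)\|$. In particular, if $\beta=d$, then $\mathcal P\mathbf c=0$ for all $\mathbf c\in\widetilde{\mathcal C}$ and $\operatorname{Tr}H_\alpha^n(\tilde k+k_o)=\operatorname{Tr}H_0^n(\tilde k)$ for all $n\in\mathbb N$. (ii) If two periodic magnetic potentials $\alpha_1,\alpha_2$ have the same flux through each of the $\beta-d$ basis cycles $\mathbf c_{d+1},\dots,\mathbf c_\beta$ of $\mathcal C^0$, then $\sigma(H_{\alpha_1})=\sigma(H_{\alpha_2})$.
   Context: Let $\Gamma\subset\mathbb R^d$ be a lattice with basis $\mathfrak a_1,\dots,\mathfrak a_d$ and fundamental cell $\Omega=\{\sum_sx_s\mathfrak a_s:(x_s)\in[0,1)^d\}$. Let $\mathcal G=(\mathcal V,\mathcal E)$ be a connected, locally finite, infinite graph embedded in $\mathbb R^d$ (loops, multiple edges allowed), invariant under $\Gamma$-translations, with finite quotient $\mathcal G_*=(\mathcal V_*,\mathcal E_* )$; $\nu=\#\mathcal V_*$; Betti number $\beta=\#\mathcal E_*-\#\mathcal V_*+1$. Oriented edges $\mathcal A,\mathcal A_*$; $\underline{\mathbf e}$ inverse; $\varkappa_x$ = number of oriented edges starting at $x$. Edge index: $x=x_0+[x]$, $x_0\in\mathcal V\cap\Omega$, $[x]\in\Gamma$ with coordinates $[x]_{\mathbb A}\in\mathbb Z^d$; $\tau((x,y))=[y]_{\mathbb A}-[x]_{\mathbb A}$, defined on $\mathcal A_*$. Periodic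 magnetic potential $\alpha:\mathcal A\to\mathbb R$ ($\alpha(\underline{\mathbf e})=-\alpha(\mathbf e)$, $\Gamma$-invariant); $V$ real $\Gamma$-periodic. $H_\alpha=-\Delta_\alpha+V$, $\Delta_\alpha=\varkappa-A_\alpha$, $(A_\alpha f)_x=\sum_{\mathbf e=(x,y)\in\mathcal A}e^{i\alpha(\mathbf e)}f_y$; fiber operators $H_\alpha(k)=A_\alpha(k)-\varkappa+V$ on $\mathbb C^\nu$, $(A_\alpha(k)f)_x=\sum_{\mathbf e=(x,y)\in\mathcal A_*}e^{i(\alpha(\mathbf e)+\langle\tau(\mathbf e),k\rangle)}f_y$, $k\in\mathbb T^d=\mathbb R^d/(2\pi\mathbb Z)^d$; $\sigma(H_\alpha)=\bigcup_k\sigma(H_\alpha(k))$; $H_0$ is $H_\alpha$ with $\alpha=0$. Cycles: ordered sequences of oriented edges $(\mathbf e_1,\dots,\mathbf e_n)$ with $\mathbf e_s=(x_{s-1},x_s)$, $x_n=x_0$ (cyclic shifts distinct; backtracking allowed); index $\tau(\mathbf c)=\sum\tau(\mathbf e)$; flux $\alpha(\mathbf c)=(\sum\alpha(\mathbf e))\bmod 2\pi$; both extend additively to the integer cycle space (first homology with $\mathbb Z$ coefficients). Modified graph $\widetilde{\mathcal G}_*$: add at each $x\in\mathcal V_*$ one oriented loop $\mathbf e_x$ (single oriented edge) with $\tau(\mathbf e_x)=0$, $\alpha(\mathbf e_x)=0$; weights $\omega(\mathbf e)=1$ on $\mathcal A_*$, $\omega(\mathbf e_x)=V_x-\varkappa_x$,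 $\omega(\mathbf c)=\prod_s\omega(\mathbf e_s)$; $\widetilde{\mathcal C}$ is the cycle space of $\widetilde{\mathcal G}_*$, $\widetilde{\mathcal C}_n$ (resp. $\widetilde{\mathcal C}_n^{\mathrm m}$) the set of cycles of length $n$ (resp. and index $\mathrm m$). Such a basis $\mathbf c_1,\dots,\mathbf c_\beta$ exists, and $\{\mathbf c_1,\dots,\mathbf c_\beta\}\cup\{\mathbf e_x\}$ is a basis of $\widetilde{\mathcal C}$, so every $\mathbf c\in\widetilde{\mathcal C}$ is uniquely $\mathbf c=\sum_{s=1}^\beta n_s(\mathbf c)\mathbf c_s+\sum_x n_x(\mathbf c)\mathbf e_x$ with integer coefficients; the projection is $\mathcal P\mathbf c=\sum_{s=d+1}^\beta n_s(\mathbf c)\mathbf c_s\in\mathcal C^0$. *)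

theory Defs
  imports "HOL-Analysis.Analysis"
begin

text \<open>Quotient graph G_* : vertices = finite type 'v, oriented edges = finite type 'e,
  src/tgt/ie give start, end and inverse of an oriented edge; tau :: 'e => int^'d is the
  edge index; alpha the magnetic potential; V the electric potential.\<close>

definition quot_graph :: "('e::finite \<Rightarrow> 'v::finite) \<Rightarrow> ('e \<Rightarrow> 'v) \<Rightarrow> ('e \<Rightarrow> 'e)
    \<Rightarrow> ('e \<Rightarrow> int^'d::finite) \<Rightarrow> bool" where
  "quot_graph src tgt ie tau \<longleftrightarrow>
     (\<forall>e. ie (ie e) = e \<and> ie e \<noteq> e \<and> src (ie e) = tgt e \<and> tau (ie e) = - tau e) \<and>
     (\<forall>x y. (x, y) \<in> (range (\<lambda>e. (src e, tgt e)))\<^sup>*)"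

definition magnetic_pot :: "('e \<Rightarrow> 'e) \<Rightarrow> ('e \<Rightarrow> real) \<Rightarrow> bool" where
  "magnetic_pot ie alpha \<longleftrightarrow> (\<forall>e. alpha (ie e) = - alpha e)"

text \<open>Betti number: #E_* - #V_* + 1, where #E_* is half the number of oriented edges.\<close>
definition betti :: "('e::finite \<Rightarrow> 'v::finite) \<Rightarrow> int" where
  "betti src = int (CARD('e) div 2) - int CARD('v) + 1"

definition kappa :: "('e::finite \<Rightarrow> 'v) \<Rightarrow> 'v \<Rightarrow> nat" where
  "kappa src x = card {e. src e = x}"

definition rvec :: "int^'d::finite \<Rightarrow> real^'d" where
  "rvec m = (\<chi> j. real_of_int (m $ j))"

definition ip :: "int^'d::finite \<Rightarrow> real^'d \<Rightarrow> real" where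
  "ip m k = (\<Sum>j\<in>UNIV. real_of_int (m $ j) * k $ j)"

definition Hfib :: "('e::finite \<Rightarrow> 'v::finite) \<Rightarrow> ('e \<Rightarrow> 'v) \<Rightarrow> ('e \<Rightarrow> int^'d::finite)
    \<Rightarrow> ('e \<Rightarrow> real) \<Rightarrow> ('v \<Rightarrow> real) \<Rightarrow> real^'d \<Rightarrow> complex^'v^'v" where
  "Hfib src tgt tau alpha V k = (\<chi> x y.
      (\<Sum>e\<in>{e. src e = x \<and> tgt e = y}. exp (\<i> * complex_of_real (alpha e + ip (tau e) k)))
      + (if x = y then complex_of_real (V x - real (kappa src x)) else 0))"

primrec mat_pow :: "'a::semiring_1^'n::finite^'n \<Rightarrow> nat \<Rightarrow> 'a^'n^'n" where
  "mat_pow A 0 = mat 1"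
| "mat_pow A (Suc n) = A ** mat_pow A n"

definition mat_spectrum :: "complex^'n::finite^'n \<Rightarrow> complex set" where
  "mat_spectrum A = {l. \<exists>v. v \<noteq> 0 \<and> A *v v = l *s v}"

definition spec_H :: "('e::finite \<Rightarrow> 'v::finite) \<Rightarrow> ('e \<Rightarrow> 'v) \<Rightarrow> ('e \<Rightarrow> int^'d::finite)
    \<Rightarrow> ('e \<Rightarrow> real) \<Rightarrow> ('v \<Rightarrow> real) \<Rightarrow> complex set" where
  "spec_H src tgt tau alpha V = (\<Union>k. mat_spectrum (Hfib src tgt tau alpha V k))"

text \<open>Modified graph: a step is either an oriented edge (Inl e) or the added loop at x (Inr x).\<close>
definition ssrc :: "('e \<Rightarrow> 'v) \<Rightarrow> 'e + 'v \<Rightarrow> 'v" where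
  "ssrc src s = (case s of Inl e \<Rightarrow> src e | Inr x \<Rightarrow> x)"

definition stgt :: "('e \<Rightarrow> 'v) \<Rightarrow> 'e + 'v \<Rightarrow> 'v" where
  "stgt tgt s = (case s of Inl e \<Rightarrow> tgt e | Inr x \<Rightarrow> x)"

text \<open>Cycles of the modified graph of length n (n >= 1): closed sequences of steps;
  cyclic shifts are distinct lists, backtracking allowed.\<close>
definition mcycles :: "('e \<Rightarrow> 'v) \<Rightarrow> ('e \<Rightarrow> 'v) \<Rightarrow> nat \<Rightarrow> ('e + 'v) list set" where
  "mcycles src tgt n = {c. length c = n \<and> c \<noteq> [] \<and>
      (\<forall>i<length c. stgt tgt (c ! i) = ssrc src (c ! ((i + 1) mod length c)))}"

definition omega :: "('e::finite \<Rightarrow> 'v) \<Rightarrow> ('v \<Rightarrow> real) \<Rightarrow> ('e + 'v) list \<Rightarrow> real" where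
  "omega src V c = prod_list (map (\<lambda>s. case s of Inl e \<Rightarrow> 1 | Inr x \<Rightarrow> V x - real (kappa src x)) c)"

definition walk_tau :: "('e \<Rightarrow> int^'d::finite) \<Rightarrow> ('e + 'v) list \<Rightarrow> int^'d" where
  "walk_tau tau c = sum_list (map (\<lambda>s. case s of Inl e \<Rightarrow> tau e | Inr x \<Rightarrow> 0) c)"

text \<open>Integer 1-chains on G_*: antisymmetric functions 'e => int. The homology class (edge part)
  of a cycle of the modified graph; the loops e_x form the remaining free summand.\<close>
definition walk_chain :: "('e \<Rightarrow> 'e) \<Rightarrow> ('e + 'v) list \<Rightarrow> 'e \<Rightarrow> int" where
  "walk_chain ie c = (\<lambda>e. int (count_list c (Inl e)) - int (count_list c (Inl (ie e))))"

definition cycle_space :: "('e::finite \<Rightarrow> 'v) \<Rightarrow> ('e \<Rightarrow> 'e) \<Rightarrow> ('e \<Rightarrow> int) set" where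
  "cycle_space tgt ie = {f. (\<forall>e. f (ie e) = - f e) \<and> (\<forall>x. (\<Sum>e\<in>{e. tgt e = x}. f e) = 0)}"

text \<open>Index and flux extended additively to chains (each oriented edge pair counted once).\<close>
definition tau_chain :: "('e::finite \<Rightarrow> int^'d::finite) \<Rightarrow> ('e \<Rightarrow> int) \<Rightarrow> int^'d" where
  "tau_chain tau f = (\<chi> j. (\<Sum>e\<in>UNIV. f e * tau e $ j) div 2)"

definition flux :: "('e::finite \<Rightarrow> real) \<Rightarrow> ('e \<Rightarrow> int) \<Rightarrow> real" where
  "flux alpha f = (\<Sum>e\<in>UNIV. real_of_int (f e) * alpha e) / 2"

definition combo :: "('d::finite \<Rightarrow> 'e \<Rightarrow> int) \<Rightarrow> (nat \<Rightarrow> 'e \<Rightarrow> int) \<Rightarrow> nat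
    \<Rightarrow> ('d \<Rightarrow> int) \<Rightarrow> (nat \<Rightarrow> int) \<Rightarrow> 'e \<Rightarrow> int" where
  "combo cd c0 m a b = (\<lambda>e. (\<Sum>j\<in>UNIV. a j * cd j e) + (\<Sum>s<m. b s * c0 s e))"

definition Pproj :: "('d::finite \<Rightarrow> 'e \<Rightarrow> int) \<Rightarrow> (nat \<Rightarrow> 'e \<Rightarrow> int) \<Rightarrow> nat
    \<Rightarrow> ('e \<Rightarrow> int) \<Rightarrow> 'e \<Rightarrow> int" where
  "Pproj cd c0 m z = (THE p. \<exists>a b. z = combo cd c0 m a b \<and> p = (\<lambda>e. \<Sum>s<m. b s * c0 s e))"

end

theory Submission
  imports Defs
begin


fun wpath :: "('e \<Rightarrow> 'v) \<Rightarrow> ('e \<Rightarrow> 'v) \<Rightarrow> ('e+'v) list \<Rightarrow> 'v \<Rightarrow> 'v \<Rightarrow> bool" where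
  "wpath src tgt [] x y = (x = y)"
| "wpath src tgt (s#c) x y = (ssrc src s = x \<and> wpath src tgt c (stgt tgt s) y)"

lemma wpath_append: "wpath src tgt (c1@c2) x y \<longleftrightarrow> (\<exists>z. wpath src tgt c1 x z \<and> wpath src tgt c2 z y)"
  by (induct c1 arbitrary: x) auto

lemma wpath_idx: "c \<noteq> [] \<Longrightarrow> wpath src tgt c x y \<longleftrightarrow>
   (ssrc src (hd c) = x \<and> stgt tgt (last c) = y \<and> (\<forall>i<length c - 1. stgt tgt (c!i) = ssrc src (c!Suc i)))"
proof (induct c arbitrary: x)
  case Nil then show ?case by simp
next
  case (Cons s c)
  show ?case
  proof (cases "c = []")
    case True then show ?thesis by simp
  next
    case False
    have "(\<forall>i<length (s#c) - 1. stgt tgt ((s#c)!i) = ssrc src ((s#c)!Suc i)) \<longleftrightarrow>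
          stgt tgt s = ssrc src (hd c) \<and> (\<forall>i<length c - 1. stgt tgt (c!i) = ssrc src (c!Suc i))"
      (is "?L \<longleftrightarrow> ?R")
    proof
      assume ?L
      then have a: "stgt tgt s = ssrc src (hd c)" using False by (cases c) auto
      have "\<forall>i<length c - 1. stgt tgt (c!i) = ssrc src (c!Suc i)"
      proof (intro allI impI)
        fix i assume "i < length c - 1"
        then show "stgt tgt (c!i) = ssrc src (c!Suc i)" using \<open>?L\<close>[rule_format, of "Suc i"] by simp
      qed
      with a show ?R by simp
    next
      assume ?R
      show ?L
      proof (intro allI impI)
        fix i assume "i < length (s#c) - 1"
        then show "stgt tgt ((s#c)!i) = ssrc src ((s#c)!Suc i)"
          using \<open>?R\<close> False by (cases i) (auto simp: hd_conv_nth)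
      qed
    qed
    then show ?thesis using Cons(1)[OF False, of "stgt tgt s"] False by auto
  qed
qed

lemma mcycles_char: "n \<ge> 1 \<Longrightarrow> c \<in> mcycles src tgt n \<longleftrightarrow>
    length c = n \<and> wpath src tgt c (ssrc src (hd c)) (ssrc src (hd c))"
proof -
  assume n: "n \<ge> 1"
  show ?thesis
  proof (cases "length c = n")
    case False then show ?thesis by (auto simp: mcycles_def)
  next
    case True
    then have ne: "c \<noteq> []" using n by auto
    have "(\<forall>i<length c. stgt tgt (c ! i) = ssrc src (c ! ((i + 1) mod length c))) \<longleftrightarrow>
          (stgt tgt (last c) = ssrc src (hd c) \<and> (\<forall>i<length c - 1. stgt tgt (c!i) = ssrc src (c!Suc i)))"
      (is "?L \<longleftrightarrow> ?R")
    proof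
      assume L: ?L
      have "stgt tgt (last c) = ssrc src (hd c)"
        using L[rule_format, of "length c - 1"] ne by (simp add: last_conv_nth hd_conv_nth)
      moreover have "\<forall>i<length c - 1. stgt tgt (c!i) = ssrc src (c!Suc i)"
        using L by auto
      ultimately show ?R by simp
    next
      assume R: ?R
      show ?L
      proof (intro allI impI)
        fix i assume i: "i < length c"
        show "stgt tgt (c ! i) = ssrc src (c ! ((i + 1) mod length c))"
        proof (cases "i = length c - 1")
          case True
          then have "(i+1) mod length c = 0" using ne by simp
          then show ?thesis using R True ne by (simp add: last_conv_nth hd_conv_nth)
        next
          case False
          then have "(i+1) mod length c = Suc i" using i by simp
          then show ?thesis using R False i by simp
        qed
      qed
    qed
    then show ?thesis using True ne wpath_idx[OF ne] by (auto simp: mcycles_def)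
  qed
qed


lemma mcycles_char2: "n \<ge> 1 \<Longrightarrow> c \<in> mcycles src tgt n \<longleftrightarrow>
    length c = n \<and> (\<exists>x. wpath src tgt c x x)"
proof -
  assume n: "n \<ge> 1"
  have "wpath src tgt c x x \<Longrightarrow> c \<noteq> [] \<Longrightarrow> x = ssrc src (hd c)" for x
    by (cases c) auto
  then show ?thesis using mcycles_char[OF n, of c] n by (metis list.size(3) not_one_le_zero)
qed

definition walksum :: "('e \<Rightarrow> real) \<Rightarrow> ('e + 'v) list \<Rightarrow> real" where
  "walksum alpha c = sum_list (map (\<lambda>s. case s of Inl e \<Rightarrow> alpha e | Inr x \<Rightarrow> 0) c)"

definition flip :: "('e \<Rightarrow> 'e) \<Rightarrow> 'e + 'v \<Rightarrow> 'e + 'v" where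
  "flip ie s = (case s of Inl e \<Rightarrow> Inl (ie e) | Inr x \<Rightarrow> Inr x)"

definition rflip :: "('e \<Rightarrow> 'e) \<Rightarrow> ('e + 'v) list \<Rightarrow> ('e + 'v) list" where
  "rflip ie c = rev (map (flip ie) c)"

definition Lv :: "('e::finite \<Rightarrow> int^'d) \<Rightarrow> ('e \<Rightarrow> int) \<Rightarrow> 'd \<Rightarrow> int" where
  "Lv tau f j = (\<Sum>e\<in>UNIV. f e * tau e $ j)"

lemma walk_chain_Nil[simp]: "walk_chain ie [] e = 0"
  by (simp add: walk_chain_def)

lemma walk_chain_Cons: "walk_chain ie (s#c) e =
   (if s = Inl e then 1 else 0) - (if s = Inl (ie e) then 1 else 0) + walk_chain ie c e"
  by (simp add: walk_chain_def)

lemma walk_chain_append: "walk_chain ie (c1@c2) e = walk_chain ie c1 e + walk_chain ie c2 e"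
  by (simp add: walk_chain_def)

lemma flux_add: "flux alpha (\<lambda>e. f e + g e) = flux alpha f + flux alpha g"
  by (simp add: flux_def sum.distrib algebra_simps add_divide_distrib)

lemma Lv_add: "Lv tau (\<lambda>e. f e + g e) j = Lv tau f j + Lv tau g j"
  by (simp add: Lv_def sum.distrib algebra_simps)

locale qg =
  fixes src tgt :: "'e::finite \<Rightarrow> 'v::finite" and ie :: "'e \<Rightarrow> 'e" and tau :: "'e \<Rightarrow> int^'d::finite"
  assumes ie_ie[simp]: "ie (ie e) = e" and ie_ne: "ie e \<noteq> e" and src_ie[simp]: "src (ie e) = tgt e"
    and tau_ie[simp]: "tau (ie e) = - tau e"
begin

lemma tgt_ie[simp]: "tgt (ie e) = src e"
  using src_ie[of "ie e"] by simp

lemma ie_ne2[simp]: "e \<noteq> ie e"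
  using ie_ne[of e] by metis

lemma ie_eq_iff: "ie a = b \<longleftrightarrow> a = ie b"
  by auto

lemma walk_chain_anti: "walk_chain ie c (ie e) = - walk_chain ie c e"
  by (simp add: walk_chain_def)

lemma flux_walk:
  assumes mag: "magnetic_pot ie alpha"
  shows "flux alpha (walk_chain ie c) = walksum alpha c"
proof (induct c)
  case Nil then show ?case by (simp add: flux_def walksum_def)
next
  case (Cons s c)
  have eq: "walk_chain ie (s#c) = (\<lambda>e. walk_chain ie [s] e + walk_chain ie c e)"
    using walk_chain_append[of ie "[s]" c] by auto
  have st: "flux alpha (walk_chain ie [s]) = (case s of Inl e \<Rightarrow> alpha e | Inr x \<Rightarrow> 0)"
  proof (cases s)
    case (Inl e0)
    have "flux alpha (walk_chain ie [s]) = (\<Sum>e\<in>UNIV. (if e = e0 then alpha e else 0) - (if e = ie e0 then alpha e else 0)) / 2"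
      unfolding flux_def walk_chain_def Inl
      by (intro arg_cong[where f="\<lambda>x. x/2"] sum.cong) (auto simp: ie_eq_iff ie_ne)
    also have "\<dots> = (alpha e0 - alpha (ie e0)) / 2" by (simp add: sum_subtractf)
    also have "\<dots> = alpha e0" using mag by (simp add: magnetic_pot_def)
    finally show ?thesis using Inl by simp
  next
    case (Inr x)
    then show ?thesis by (simp add: flux_def walk_chain_def)
  qed
  show ?case unfolding eq flux_add st Cons by (simp add: walksum_def)
qed

lemma Lv_walk: "Lv tau (walk_chain ie c) j = 2 * walk_tau tau c $ j"
proof (induct c)
  case Nil then show ?case by (simp add: Lv_def walk_tau_def)
next
  case (Cons s c)
  have eq: "walk_chain ie (s#c) = (\<lambda>e. walk_chain ie [s] e + walk_chain ie c e)"
    using walk_chain_append[of ie "[s]" c] by auto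
  have st: "Lv tau (walk_chain ie [s]) j = 2 * (case s of Inl e \<Rightarrow> tau e | Inr x \<Rightarrow> 0) $ j"
  proof (cases s)
    case (Inl e0)
    have "Lv tau (walk_chain ie [s]) j = (\<Sum>e\<in>UNIV. (if e = e0 then tau e $ j else 0) - (if e = ie e0 then tau e $ j else 0))"
      unfolding Lv_def walk_chain_def Inl
      by (intro sum.cong) (auto simp: ie_eq_iff ie_ne)
    also have "\<dots> = tau e0 $ j - tau (ie e0) $ j" by (simp add: sum_subtractf)
    also have "\<dots> = 2 * tau e0 $ j" by simp
    finally show ?thesis using Inl by simp
  next
    case (Inr x)
    then show ?thesis by (simp add: Lv_def walk_chain_def)
  qed
  show ?case unfolding eq Lv_add st Cons by (simp add: walk_tau_def)
qed

lemma tau_chain_walk: "tau_chain tau (walk_chain ie c) = walk_tau tau c"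
  by (simp add: tau_chain_def vec_eq_iff Lv_walk[unfolded Lv_def])

lemma walk_chain_bdry:
  "wpath src tgt c a b \<Longrightarrow>
   (\<Sum>e\<in>{e. tgt e = x}. walk_chain ie c e) = (if x = b then 1 else 0) - (if x = a then 1 else 0)"
proof (induct c arbitrary: a)
  case Nil then show ?case by simp
next
  case (Cons s c)
  have IH: "(\<Sum>e\<in>{e. tgt e = x}. walk_chain ie c e) = (if x = b then 1 else 0) - (if x = stgt tgt s then 1 else 0)"
    using Cons by simp
  have st: "(\<Sum>e\<in>{e. tgt e = x}. (if s = Inl e then 1 else 0) - (if s = Inl (ie e) then 1 else 0) :: int)
       = (if x = stgt tgt s then 1 else 0) - (if x = a then 1 else 0)"
  proof (cases s)
    case (Inl e0)
    have "(\<Sum>e\<in>{e. tgt e = x}. (if s = Inl e then 1 else 0) - (if s = Inl (ie e) then 1 else 0) :: int)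
      = (\<Sum>e\<in>{e. tgt e = x}. (if e = e0 then 1 else 0)) - (\<Sum>e\<in>{e. tgt e = x}. (if e = ie e0 then 1 else 0))"
      unfolding sum_subtractf[symmetric] Inl by (rule sum.cong) auto
    also have "\<dots> = (if tgt e0 = x then 1 else 0) - (if tgt (ie e0) = x then 1 else 0)"
      by (simp add: sum.delta')
    finally show ?thesis using Cons(2) Inl by (auto simp: ssrc_def stgt_def)
  next
    case (Inr y)
    then show ?thesis using Cons(2) by (simp add: ssrc_def stgt_def)
  qed
  show ?case
    unfolding walk_chain_Cons sum.distrib st IH by simp
qed

lemma walk_chain_cycle: "wpath src tgt c x x \<Longrightarrow> walk_chain ie c \<in> cycle_space tgt ie"
  using walk_chain_bdry[of c x x] by (simp add: cycle_space_def walk_chain_anti)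

lemma inj_flip: "inj (flip ie)"
  by (auto simp: inj_def flip_def split: sum.splits) (metis ie_ie)

lemma walk_chain_rflip: "walk_chain ie (rflip ie c) e = - walk_chain ie c e"
proof -
  have "count_list (map (flip ie) c) (Inl e') = count_list c (Inl (ie e'))" for e'
    using count_list_map_conv[OF inj_flip, of c "Inl (ie e')"] by (simp add: flip_def)
  then show ?thesis by (simp add: walk_chain_def rflip_def)
qed

lemma wpath_rflip: "wpath src tgt c x y \<Longrightarrow> wpath src tgt (rflip ie c) y x"
proof (induct c arbitrary: x)
  case Nil then show ?case by (simp add: rflip_def)
next
  case (Cons s c)
  have "wpath src tgt [flip ie s] (stgt tgt s) x"
    using Cons(2) by (auto simp: flip_def ssrc_def stgt_def split: sum.splits)
  then show ?case using Cons by (auto simp: rflip_def wpath_append)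
qed

lemma flip_flip[simp]: "flip ie (flip ie s) = s"
  by (auto simp: flip_def split: sum.splits)

lemma rflip_rflip[simp]: "rflip ie (rflip ie c) = c"
  by (simp add: rflip_def rev_map[symmetric] comp_def)

lemma length_rflip[simp]: "length (rflip ie c) = length c"
  by (simp add: rflip_def)

lemma omega_rflip: "omega src V (rflip ie c) = omega src V c"
proof -
  have "(\<lambda>s. case s of Inl e \<Rightarrow> 1 | Inr x \<Rightarrow> V x - real (kappa src x)) \<circ> flip ie =
        (\<lambda>s. case s of Inl e \<Rightarrow> 1 | Inr x \<Rightarrow> V x - real (kappa src x))"
    by (auto simp: flip_def fun_eq_iff split: sum.splits)
  then show ?thesis unfolding omega_def rflip_def rev_map[symmetric]
    by (simp add: prod_list.rev)
qed

lemma walksum_rflip: "magnetic_pot ie alpha \<Longrightarrow> walksum alpha (rflip ie c) = - walksum alpha c"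
proof -
  assume m: "magnetic_pot ie alpha"
  have "walk_chain ie (rflip ie c) = (\<lambda>e. - walk_chain ie c e)"
    using walk_chain_rflip by auto
  then show ?thesis using flux_walk[OF m, of c] flux_walk[OF m, of "rflip ie c"]
    by (simp add: flux_def sum_negf)
qed

lemma walk_tau_rflip: "walk_tau tau (rflip ie c) = - walk_tau tau c"
proof -
  have "walk_chain ie (rflip ie c) = (\<lambda>e. - walk_chain ie c e)"
    using walk_chain_rflip by auto
  then have "Lv tau (walk_chain ie (rflip ie c)) j = - Lv tau (walk_chain ie c) j" for j
    by (simp add: Lv_def sum_negf)
  then have "2 * walk_tau tau (rflip ie c) $ i = 2 * (- walk_tau tau c $ i)" for i
    using Lv_walk by (metis mult_minus_right)
  then show ?thesis by (simp add: vec_eq_iff)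
qed

lemma rflip_mcycles: "n \<ge> 1 \<Longrightarrow> c \<in> mcycles src tgt n \<Longrightarrow> rflip ie c \<in> mcycles src tgt n"
  using mcycles_char2 wpath_rflip by (metis length_rflip)

end



definition wt :: "('e::finite \<Rightarrow> 'v) \<Rightarrow> ('e \<Rightarrow> int^'d::finite) \<Rightarrow> ('e \<Rightarrow> real) \<Rightarrow> ('v \<Rightarrow> real)
   \<Rightarrow> real^'d \<Rightarrow> 'e + 'v \<Rightarrow> complex" where
  "wt src tau alpha V k s = (case s of Inl e \<Rightarrow> exp (\<i> * complex_of_real (alpha e + ip (tau e) k))
       | Inr x \<Rightarrow> complex_of_real (V x - real (kappa src x)))"

definition Wk :: "('e \<Rightarrow> 'v) \<Rightarrow> ('e \<Rightarrow> 'v) \<Rightarrow> nat \<Rightarrow> 'v \<Rightarrow> 'v \<Rightarrow> ('e + 'v) list set" where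
  "Wk src tgt n x y = {c. length c = n \<and> wpath src tgt c x y}"

lemma finite_Wk: "finite (Wk src tgt n x y :: ('e::finite + 'v::finite) list set)"
proof -
  have "Wk src tgt n x y \<subseteq> {c. length c = n}" by (auto simp: Wk_def)
  moreover have "finite {c :: ('e+'v) list. length c = n}"
    using finite_lists_length_eq[of "UNIV :: ('e+'v) set" n] by simp
  ultimately show ?thesis by (rule finite_subset)
qed

lemma finite_mcycles: "finite (mcycles src tgt n :: ('e::finite + 'v::finite) list set)"
proof -
  have "mcycles src tgt n \<subseteq> {c. length c = n}" by (auto simp: mcycles_def)
  moreover have "finite {c :: ('e+'v) list. length c = n}"
    using finite_lists_length_eq[of "UNIV :: ('e+'v) set" n] by simp
  ultimately show ?thesis by (rule finite_subset)
qed

lemma Hfib_steps: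
  fixes src tgt :: "'e::finite \<Rightarrow> 'v::finite" and tau :: "'e \<Rightarrow> int^'d::finite"
  shows "Hfib src tgt tau alpha V k $ x $ y =
   (\<Sum>s\<in>UNIV. if ssrc src s = x \<and> stgt tgt s = y then wt src tau alpha V k s else 0)"
proof -
  have U: "(UNIV :: ('e+'v) set) = UNIV <+> UNIV" by auto
  have P1: "(\<Sum>s\<in>UNIV. if ssrc src s = x \<and> stgt tgt s = y then wt src tau alpha V k s else 0)
    = (\<Sum>e\<in>UNIV. if src e = x \<and> tgt e = y then exp (\<i> * complex_of_real (alpha e + ip (tau e) k)) else 0)
      + (\<Sum>z\<in>UNIV. if z = x \<and> z = y then wt src tau alpha V k (Inr z) else 0)"
    unfolding U
    apply (subst sum.Plus)
      apply simp
     apply simp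
    apply (simp only: comp_def ssrc_def stgt_def sum.case)
    apply (rule arg_cong2[where f="(+)"])
     apply (rule sum.cong, simp, simp add: wt_def)
    apply (rule sum.cong, simp, simp add: wt_def)
    done
  have P2: "(\<Sum>e\<in>UNIV. if src e = x \<and> tgt e = y then exp (\<i> * complex_of_real (alpha e + ip (tau e) k)) else 0)
     = (\<Sum>e\<in>{e. src e = x \<and> tgt e = y}. exp (\<i> * complex_of_real (alpha e + ip (tau e) k)))"
    using sum.inter_filter[of "UNIV::'e set" "\<lambda>e. exp (\<i> * complex_of_real (alpha e + ip (tau e) k))" "\<lambda>e. src e = x \<and> tgt e = y"]
    by simp
  have P3: "(\<Sum>z\<in>UNIV. if z = x \<and> z = y then wt src tau alpha V k (Inr z) else 0)
     = (if x = y then complex_of_real (V x - real (kappa src x)) else 0)"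
  proof (cases "x = y")
    case True then show ?thesis by (simp add: wt_def)
  next
    case False
    have "(\<Sum>z\<in>UNIV. if z = x \<and> z = y then wt src tau alpha V k (Inr z) else 0) = 0"
      by (rule sum.neutral) (use False in auto)
    then show ?thesis using False by simp
  qed
  show ?thesis unfolding P1 P2 P3 Hfib_def vec_lambda_beta ..
qed

lemma Wk_Suc: "Wk src tgt (Suc n) x y =
   (\<lambda>(s,c). s#c) ` (SIGMA s:{s. ssrc src s = x}. Wk src tgt n (stgt tgt s) y)"
  by (auto simp: Wk_def image_iff length_Suc_conv)

lemma matpow_walks: "mat_pow (Hfib src tgt tau alpha V k) n $ x $ y =
   (\<Sum>c\<in>Wk src tgt n x y. prod_list (map (wt src tau alpha V k) c))"
proof (induct n arbitrary: x)
  case 0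
  have "Wk src tgt 0 x y = (if x = y then {[]} else {})" by (auto simp: Wk_def)
  then show ?case by (simp add: mat_def)
next
  case (Suc n)
  let ?H = "Hfib src tgt tau alpha V k"
  let ?w = "wt src tau alpha V k"
  let ?F = "\<lambda>z. (\<Sum>c\<in>Wk src tgt n z y. prod_list (map ?w c))"
  have "mat_pow ?H (Suc n) $ x $ y = (\<Sum>z\<in>UNIV. ?H $ x $ z * ?F z)"
    by (simp add: matrix_matrix_mult_def Suc)
  also have "\<dots> = (\<Sum>z\<in>UNIV. \<Sum>s\<in>UNIV. if ssrc src s = x \<and> stgt tgt s = z then ?w s * ?F z else 0)"
    unfolding Hfib_steps sum_distrib_right by (intro sum.cong refl) simp
  also have "\<dots> = (\<Sum>s\<in>UNIV. \<Sum>z\<in>UNIV. if ssrc src s = x \<and> stgt tgt s = z then ?w s * ?F z else 0)"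
    by (rule sum.swap)
  also have "\<dots> = (\<Sum>s\<in>UNIV. if ssrc src s = x then ?w s * ?F (stgt tgt s) else 0)"
  proof (rule sum.cong[OF refl])
    fix s
    show "(\<Sum>z\<in>UNIV. if ssrc src s = x \<and> stgt tgt s = z then ?w s * ?F z else 0) =
          (if ssrc src s = x then ?w s * ?F (stgt tgt s) else 0)"
      by (cases "ssrc src s = x") (simp_all add: sum.delta)
  qed
  also have "\<dots> = (\<Sum>s\<in>{s. ssrc src s = x}. ?w s * ?F (stgt tgt s))"
    by (simp add: sum.If_cases Int_def)
  also have "\<dots> = (\<Sum>s\<in>{s. ssrc src s = x}. \<Sum>c\<in>Wk src tgt n (stgt tgt s) y. prod_list (map ?w (s#c)))"
    by (simp add: sum_distrib_left)
  also have "\<dots> = (\<Sum>p\<in>(SIGMA s:{s. ssrc src s = x}. Wk src tgt n (stgt tgt s) y). prod_list (map ?w (fst p # snd p)))"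
    by (subst sum.Sigma) (simp_all add: finite_Wk split_def)
  also have "\<dots> = (\<Sum>c\<in>Wk src tgt (Suc n) x y. prod_list (map ?w c))"
    unfolding Wk_Suc by (subst sum.reindex) (auto simp: inj_on_def intro!: sum.cong)
  finally show ?case .
qed

lemma ip_add: "ip (a + b) k = ip a k + ip b k"
  by (simp add: ip_def sum.distrib algebra_simps)

lemma ip_zero[simp]: "ip 0 k = 0"
  by (simp add: ip_def)

lemma ip_neg: "ip (- a) k = - ip a k"
  by (simp add: ip_def sum_negf)

lemma ip_add2: "ip a (k + k') = ip a k + ip a k'"
  by (simp add: ip_def sum.distrib algebra_simps)

lemma prod_wt: "prod_list (map (wt src tau alpha V k) c) =
   complex_of_real (omega src V c) * exp (\<i> * complex_of_real (walksum alpha c + ip (walk_tau tau c) k))"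
proof (induct c)
  case Nil then show ?case by (simp add: omega_def walksum_def walk_tau_def)
next
  case (Cons s c)
  show ?case
  proof (cases s)
    case (Inl e)
    let ?A = "alpha e + ip (tau e) k"
    let ?B = "walksum alpha c + ip (walk_tau tau c) k"
    have C: "walksum alpha (s#c) + ip (walk_tau tau (s#c)) k = ?A + ?B"
      using Inl by (simp add: walksum_def walk_tau_def ip_add)
    have "exp (\<i> * complex_of_real (?A + ?B)) = exp (\<i> * complex_of_real ?A + \<i> * complex_of_real ?B)"
      by (simp add: distrib_left)
    also have "\<dots> = exp (\<i> * complex_of_real ?A) * exp (\<i> * complex_of_real ?B)"
      by (rule exp_add)
    finally have E: "exp (\<i> * complex_of_real (?A + ?B)) = exp (\<i> * complex_of_real ?A) * exp (\<i> * complex_of_real ?B)" .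
    have O: "omega src V (s#c) = omega src V c" using Inl by (simp add: omega_def)
    have "prod_list (map (wt src tau alpha V k) (s#c)) = exp (\<i> * complex_of_real ?A) * prod_list (map (wt src tau alpha V k) c)"
      using Inl by (simp add: wt_def)
    then show ?thesis unfolding C E O Cons by simp
  next
    case (Inr x)
    then show ?thesis using Cons
      by (simp add: omega_def walksum_def walk_tau_def wt_def)
  qed
qed

lemma trace_formula: "n \<ge> 1 \<Longrightarrow> trace (mat_pow (Hfib src tgt tau alpha V k) n) =
   (\<Sum>c\<in>mcycles src tgt n. complex_of_real (omega src V c) *
        exp (\<i> * complex_of_real (walksum alpha c + ip (walk_tau tau c) k)))"
proof -
  assume n: "n \<ge> 1"
  let ?h = "\<lambda>c. complex_of_real (omega src V c) *
        exp (\<i> * complex_of_real (walksum alpha c + ip (walk_tau tau c) k))"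
  have eq: "{c \<in> mcycles src tgt n. ssrc src (hd c) = x} = Wk src tgt n x x" for x
  proof -
    have "wpath src tgt c x x \<Longrightarrow> length c = n \<Longrightarrow> ssrc src (hd c) = x" for c
      using n by (cases c) auto
    then show ?thesis using mcycles_char[OF n] by (auto simp: Wk_def)
  qed
  have "trace (mat_pow (Hfib src tgt tau alpha V k) n) = (\<Sum>x\<in>UNIV. \<Sum>c\<in>Wk src tgt n x x. ?h c)"
    by (simp add: trace_def matpow_walks prod_wt)
  also have "\<dots> = (\<Sum>x\<in>UNIV. \<Sum>c\<in>{c \<in> mcycles src tgt n. ssrc src (hd c) = x}. ?h c)"
    by (simp add: eq)
  also have "\<dots> = (\<Sum>c\<in>mcycles src tgt n. ?h c)"
    by (rule sum.group) (auto simp: finite_mcycles)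
  finally show ?thesis .
qed



lemma flux_sum: "finite S \<Longrightarrow> flux alpha (\<lambda>e. \<Sum>s\<in>S. h s e) = (\<Sum>s\<in>S. flux alpha (h s))"
  unfolding flux_def by (simp add: sum_distrib_right sum_divide_distrib[symmetric] sum.swap[of _ S])

lemma flux_scale: "flux alpha (\<lambda>e. c * f e) = real_of_int c * flux alpha f"
  unfolding flux_def by (simp add: sum_distrib_left algebra_simps)

lemma Lv_sum: "finite S \<Longrightarrow> Lv tau (\<lambda>e. \<Sum>s\<in>S. h s e) j = (\<Sum>s\<in>S. Lv tau (h s) j)"
  unfolding Lv_def by (simp add: sum_distrib_right sum.swap[of _ S])

lemma Lv_scale: "Lv tau (\<lambda>e. c * f e) j = c * Lv tau f j"
  unfolding Lv_def by (simp add: sum_distrib_left algebra_simps)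

lemma combo_eq: "combo cd c0 m a b = (\<lambda>e. (\<Sum>j\<in>UNIV. a j * cd j e) + (\<Sum>s<m. b s * c0 s e))"
  by (simp add: combo_def)

lemma flux_combo: "flux alpha (combo cd c0 m a b) =
   (\<Sum>j\<in>UNIV. real_of_int (a j) * flux alpha (cd j)) + (\<Sum>s<m. real_of_int (b s) * flux alpha (c0 s))"
  unfolding combo_eq flux_add by (simp add: flux_sum flux_scale)

lemma Lv_combo: "Lv tau (combo cd c0 m a b) j =
   (\<Sum>i\<in>UNIV. a i * Lv tau (cd i) j) + (\<Sum>s<m. b s * Lv tau (c0 s) j)"
  unfolding combo_eq Lv_add by (simp add: Lv_sum Lv_scale)

lemma flux_alpha_diff: "flux (\<lambda>e. a1 e - a2 e) f = flux a1 f - flux a2 f"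
  unfolding flux_def by (simp add: right_diff_distrib sum_subtractf diff_divide_distrib)

lemma flux_ip: "flux (\<lambda>e. ip (tau e) t) f = (\<Sum>j\<in>UNIV. t $ j * real_of_int (Lv tau f j)) / 2"
proof -
  have "(\<Sum>e\<in>UNIV. real_of_int (f e) * ip (tau e) t)
      = (\<Sum>e\<in>UNIV. \<Sum>j\<in>UNIV. t $ j * (real_of_int (f e) * real_of_int (tau e $ j)))"
    unfolding ip_def by (simp add: sum_distrib_left mult_ac)
  also have "\<dots> = (\<Sum>j\<in>UNIV. \<Sum>e\<in>UNIV. t $ j * (real_of_int (f e) * real_of_int (tau e $ j)))"
    by (rule sum.swap)
  also have "\<dots> = (\<Sum>j\<in>UNIV. t $ j * real_of_int (Lv tau f j))"
    by (simp add: Lv_def sum_distrib_left)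
  finally show ?thesis by (simp add: flux_def)
qed

context qg
begin

lemma even_sum_inv:
  fixes g :: "'e \<Rightarrow> int"
  assumes gi: "\<forall>e. g (ie e) = g e"
  shows "finite S \<Longrightarrow> (\<forall>e\<in>S. ie e \<in> S) \<Longrightarrow> even (sum g S)"
proof (induct "card S" arbitrary: S rule: less_induct)
  case less
  show ?case
  proof (cases "S = {}")
    case True then show ?thesis by simp
  next
    case False
    then obtain e where e: "e \<in> S" by auto
    let ?S' = "S - {e} - {ie e}"
    have ie_in: "ie e \<in> S - {e}" using less(3) e ie_ne[of e] by auto
    have cl: "\<forall>x\<in>?S'. ie x \<in> ?S'" using less(3) by (auto simp: ie_eq_iff)
    have fin: "finite ?S'" using less(2) by simp
    have "card ?S' < card S" using less(2) e ie_in
      by (metis card_Diff1_less finite_Diff less.prems(1) order.strict_trans)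
    then have ev: "even (sum g ?S')" using less(1) fin cl by blast
    have "sum g S = g e + sum g (S - {e})" using less(2) e by (simp add: sum.remove)
    also have "sum g (S - {e}) = g (ie e) + sum g ?S'" using less(2) ie_in by (simp add: sum.remove)
    finally have "sum g S = 2 * g e + sum g ?S'" using gi by simp
    then show ?thesis using ev by simp
  qed
qed

lemma Lv_even: "\<forall>e. f (ie e) = - f e \<Longrightarrow> even (Lv tau f j)"
  unfolding Lv_def by (rule even_sum_inv) auto

lemma Lv_tau_chain: "\<forall>e. f (ie e) = - f e \<Longrightarrow> Lv tau f j = 2 * tau_chain tau f $ j"
  using Lv_even[of f j] by (simp add: tau_chain_def Lv_def)

end

locale qgb = qg src tgt ie tau for src tgt :: "'e::finite \<Rightarrow> 'v::finite" and ie and tau :: "'e \<Rightarrow> int^'d::finite" +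
  fixes cd :: "'d \<Rightarrow> 'e \<Rightarrow> int" and c0 :: "nat \<Rightarrow> 'e \<Rightarrow> int" and m :: nat
  assumes cd_cyc: "\<forall>j. cd j \<in> cycle_space tgt ie"
    and c0_cyc: "\<forall>s<m. c0 s \<in> cycle_space tgt ie"
    and span: "\<forall>z\<in>cycle_space tgt ie. \<exists>a b. z = combo cd c0 m a b"
    and indep: "\<forall>a b. combo cd c0 m a b = (\<lambda>_. 0) \<longrightarrow> (\<forall>j. a j = 0) \<and> (\<forall>s<m. b s = 0)"
    and tau_cd: "\<forall>j. tau_chain tau (cd j) = axis j 1"
    and tau_c0: "\<forall>s<m. tau_chain tau (c0 s) = 0"
begin

lemma Lv_cd: "Lv tau (cd i) j = (if j = i then 2 else 0)"
proof -
  have "\<forall>e. cd i (ie e) = - cd i e" using cd_cyc by (simp add: cycle_space_def)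
  then show ?thesis using Lv_tau_chain tau_cd by (simp add: axis_def)
qed

lemma Lv_c0: "s < m \<Longrightarrow> Lv tau (c0 s) j = 0"
proof -
  assume s: "s < m"
  have "\<forall>e. c0 s (ie e) = - c0 s e" using c0_cyc s by (simp add: cycle_space_def)
  then show ?thesis using Lv_tau_chain tau_c0 s by simp
qed

lemma Lv_combo2: "Lv tau (combo cd c0 m a b) j = 2 * a j"
  unfolding Lv_combo by (simp add: Lv_cd Lv_c0 if_distrib cong: if_cong)

lemma combo_diff: "combo cd c0 m (\<lambda>j. a j - a' j) (\<lambda>s. b s - b' s) =
   (\<lambda>e. combo cd c0 m a b e - combo cd c0 m a' b' e)"
  by (rule ext) (simp add: combo_def sum_subtractf left_diff_distrib)

lemma Pproj_eq: "z = combo cd c0 m a b \<Longrightarrow> Pproj cd c0 m z = (\<lambda>e. \<Sum>s<m. b s * c0 s e)"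
proof -
  assume z: "z = combo cd c0 m a b"
  show ?thesis unfolding Pproj_def
  proof (rule the_equality)
    show "\<exists>a' b'. z = combo cd c0 m a' b' \<and> (\<lambda>e. \<Sum>s<m. b s * c0 s e) = (\<lambda>e. \<Sum>s<m. b' s * c0 s e)"
      using z by blast
  next
    fix p assume "\<exists>a' b'. z = combo cd c0 m a' b' \<and> p = (\<lambda>e. \<Sum>s<m. b' s * c0 s e)"
    then obtain a' b' where z': "z = combo cd c0 m a' b'" and p: "p = (\<lambda>e. \<Sum>s<m. b' s * c0 s e)" by blast
    have "combo cd c0 m (\<lambda>j. a j - a' j) (\<lambda>s. b s - b' s) = (\<lambda>_. 0)"
      unfolding combo_diff using z z' by simp
    then have "\<forall>s<m. b s - b' s = 0" using indep by blast
    then show "p = (\<lambda>e. \<Sum>s<m. b s * c0 s e)" unfolding p by (auto intro!: sum.cong)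
  qed
qed

lemma walk_decomp:
  assumes "wpath src tgt c x x"
  obtains a b where "walk_chain ie c = combo cd c0 m a b" and "\<forall>j. a j = walk_tau tau c $ j"
proof -
  have "walk_chain ie c \<in> cycle_space tgt ie" using walk_chain_cycle[OF assms] .
  then obtain a b where z: "walk_chain ie c = combo cd c0 m a b" using span by blast
  have "\<forall>j. a j = walk_tau tau c $ j"
  proof
    fix j
    have "2 * a j = 2 * walk_tau tau c $ j" using Lv_combo2[of a b j] Lv_walk[of c j] z by simp
    then show "a j = walk_tau tau c $ j" by simp
  qed
  then show ?thesis using z that by blast
qed

lemma phase_eq:
  assumes mag: "magnetic_pot ie alpha" and c: "wpath src tgt c x x"
  shows "walksum alpha c + ip (walk_tau tau c) (\<chi> j. - flux alpha (cd j))
        = flux alpha (Pproj cd c0 m (walk_chain ie c))"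
proof -
  obtain a b where z: "walk_chain ie c = combo cd c0 m a b" and a: "\<forall>j. a j = walk_tau tau c $ j"
    using walk_decomp[OF c] by blast
  have "walksum alpha c = flux alpha (walk_chain ie c)" by (simp add: flux_walk[OF mag])
  also have "\<dots> = (\<Sum>j\<in>UNIV. real_of_int (a j) * flux alpha (cd j)) + (\<Sum>s<m. real_of_int (b s) * flux alpha (c0 s))"
    unfolding z flux_combo ..
  finally have 1: "walksum alpha c = (\<Sum>j\<in>UNIV. real_of_int (a j) * flux alpha (cd j)) + (\<Sum>s<m. real_of_int (b s) * flux alpha (c0 s))" .
  have 2: "ip (walk_tau tau c) (\<chi> j. - flux alpha (cd j)) = - (\<Sum>j\<in>UNIV. real_of_int (a j) * flux alpha (cd j))"
    using a by (simp add: ip_def sum_negf)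
  have 3: "flux alpha (Pproj cd c0 m (walk_chain ie c)) = (\<Sum>s<m. real_of_int (b s) * flux alpha (c0 s))"
    unfolding Pproj_eq[OF z] by (simp add: flux_sum flux_scale)
  show ?thesis using 1 2 3 by simp
qed

end



lemma walksum_append: "walksum alpha (c1 @ c2) = walksum alpha c1 + walksum alpha c2"
  by (simp add: walksum_def)

lemma walksum_Cons: "walksum alpha (s # c) = (case s of Inl e \<Rightarrow> alpha e | Inr x \<Rightarrow> 0) + walksum alpha c"
  by (simp add: walksum_def)

lemma walksum_zero: "walksum (\<lambda>_. 0) c = 0"
  by (induct c) (auto simp: walksum_def split: sum.splits)

lemma ip_negk: "ip a (- k) = - ip a k"
  by (simp add: ip_def sum_negf)

lemma exp_2pi_int: "exp (\<i> * complex_of_real (X + 2 * pi * real_of_int q)) = exp (\<i> * complex_of_real X)"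
proof -
  have "\<i> * complex_of_real (X + 2 * pi * real_of_int q) = \<i> * complex_of_real X + \<i> * (of_int q * (of_real pi * 2))"
    by (simp add: algebra_simps)
  then show ?thesis by simp
qed

lemma Hfib_gauge_entry:
  assumes h: "\<forall>e. \<exists>q::int. a1 e = a2 e + g (tgt e) - g (src e) + ip (tau e) t + 2 * pi * real_of_int q"
  shows "Hfib src tgt tau a2 V (k + t) $ x $ y * exp (\<i> * complex_of_real (g y))
       = exp (\<i> * complex_of_real (g x)) * Hfib src tgt tau a1 V k $ x $ y"
proof -
  have E: "exp (\<i> * complex_of_real (a2 e + ip (tau e) (k + t))) * exp (\<i> * complex_of_real (g y))
         = exp (\<i> * complex_of_real (g x)) * exp (\<i> * complex_of_real (a1 e + ip (tau e) k))"
    if e: "e \<in> {e. src e = x \<and> tgt e = y}" for e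
  proof -
    obtain q :: int where q: "a1 e = a2 e + g (tgt e) - g (src e) + ip (tau e) t + 2 * pi * real_of_int q"
      using h by blast
    have X: "g x + (a1 e + ip (tau e) k) = (a2 e + ip (tau e) (k + t) + g y) + 2 * pi * real_of_int q"
      using q e by (simp add: ip_add2)
    have "exp (\<i> * complex_of_real (g x)) * exp (\<i> * complex_of_real (a1 e + ip (tau e) k))
        = exp (\<i> * complex_of_real (g x + (a1 e + ip (tau e) k)))"
      by (simp add: distrib_left exp_add)
    also have "\<dots> = exp (\<i> * complex_of_real (a2 e + ip (tau e) (k + t) + g y))"
      unfolding X exp_2pi_int ..
    also have "\<dots> = exp (\<i> * complex_of_real (a2 e + ip (tau e) (k + t))) * exp (\<i> * complex_of_real (g y))"
      by (simp add: distrib_left exp_add)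
    finally show ?thesis by simp
  qed
  have D: "(if x = y then complex_of_real (V x - real (kappa src x)) else 0) * exp (\<i> * complex_of_real (g y))
     = exp (\<i> * complex_of_real (g x)) * (if x = y then complex_of_real (V x - real (kappa src x)) else 0)"
    by simp
  have S: "(\<Sum>e\<in>{e. src e = x \<and> tgt e = y}. exp (\<i> * complex_of_real (a2 e + ip (tau e) (k + t))) * exp (\<i> * complex_of_real (g y)))
     = (\<Sum>e\<in>{e. src e = x \<and> tgt e = y}. exp (\<i> * complex_of_real (g x)) * exp (\<i> * complex_of_real (a1 e + ip (tau e) k)))"
    by (rule sum.cong[OF refl], rule E)
  show ?thesis
    unfolding Hfib_def vec_lambda_beta distrib_left distrib_right sum_distrib_left sum_distrib_right
    by (simp only: S D)
qed

lemma spec_gauge: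
  assumes h: "\<forall>e. \<exists>q::int. a1 e = a2 e + g (tgt e) - g (src e) + ip (tau e) t + 2 * pi * real_of_int q"
  shows "mat_spectrum (Hfib src tgt tau a1 V k) \<subseteq> mat_spectrum (Hfib src tgt tau a2 V (k + t))"
proof
  fix l assume "l \<in> mat_spectrum (Hfib src tgt tau a1 V k)"
  then obtain v where v0: "v \<noteq> 0" and ev: "Hfib src tgt tau a1 V k *v v = l *s v"
    by (auto simp: mat_spectrum_def)
  define w where "w = (\<chi> y. exp (\<i> * complex_of_real (g y)) * v $ y)"
  have "w \<noteq> 0"
  proof
    assume "w = 0"
    have "v $ y = 0" for y
    proof -
      have "w $ y = 0" using \<open>w = 0\<close> by simp
      then show ?thesis by (simp add: w_def)
    qed
    then show False using v0 by (simp add: vec_eq_iff)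
  qed
  moreover have "Hfib src tgt tau a2 V (k + t) *v w = l *s w"
  proof (simp add: vec_eq_iff, intro allI)
    fix x
    have "(Hfib src tgt tau a2 V (k + t) *v w) $ x
       = (\<Sum>y\<in>UNIV. Hfib src tgt tau a2 V (k + t) $ x $ y * exp (\<i> * complex_of_real (g y)) * v $ y)"
      by (simp add: matrix_vector_mult_def w_def mult.assoc)
    also have "\<dots> = (\<Sum>y\<in>UNIV. exp (\<i> * complex_of_real (g x)) * (Hfib src tgt tau a1 V k $ x $ y * v $ y))"
      using Hfib_gauge_entry[OF h] by (simp add: mult.assoc)
    also have "\<dots> = exp (\<i> * complex_of_real (g x)) * (Hfib src tgt tau a1 V k *v v) $ x"
      by (simp add: matrix_vector_mult_def sum_distrib_left)
    also have "\<dots> = l * w $ x"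
      using ev by (simp add: w_def)
    finally show "(Hfib src tgt tau a2 V (k + t) *v w) $ x = l * w $ x" .
  qed
  ultimately show "l \<in> mat_spectrum (Hfib src tgt tau a2 V (k + t))"
    by (auto simp: mat_spectrum_def)
qed

lemma spec_H_gauge:
  assumes h: "\<forall>e. \<exists>q::int. a1 e = a2 e + g (tgt e) - g (src e) + ip (tau e) t + 2 * pi * real_of_int q"
  shows "spec_H src tgt tau a1 V \<subseteq> spec_H src tgt tau a2 V"
  unfolding spec_H_def using spec_gauge[OF h] by blast

lemma gauge_sym:
  assumes h: "\<forall>e. \<exists>q::int. a1 e = a2 e + g (tgt e) - g (src e) + ip (tau e) t + 2 * pi * real_of_int q"
  shows "\<forall>e. \<exists>q::int. a2 e = a1 e + (- g (tgt e)) - (- g (src e)) + ip (tau e) (- t) + 2 * pi * real_of_int q"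
proof
  fix e
  obtain q :: int where q: "a1 e = a2 e + g (tgt e) - g (src e) + ip (tau e) t + 2 * pi * real_of_int q"
    using h by blast
  show "\<exists>q::int. a2 e = a1 e + (- g (tgt e)) - (- g (src e)) + ip (tau e) (- t) + 2 * pi * real_of_int q"
    by (rule exI[of _ "- q"]) (simp add: q ip_negk)
qed

context qg
begin

lemma conn_walk: "(x, y) \<in> (range (\<lambda>e. (src e, tgt e)))\<^sup>* \<Longrightarrow> \<exists>c. wpath src tgt c x y"
proof (induct rule: rtrancl_induct)
  case base
  then show ?case by (rule exI[of _ "[]"]) simp
next
  case (step y z)
  then obtain c where c: "wpath src tgt c x y" by blast
  from step(2) obtain e where e: "src e = y" "tgt e = z" by auto
  have "wpath src tgt (c @ [Inl e]) x z" using c e by (auto simp: wpath_append ssrc_def stgt_def)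
  then show ?case by blast
qed

lemma sum_rflip:
  assumes n: "n \<ge> 1"
  shows "(\<Sum>c\<in>mcycles src tgt n. F c) = (\<Sum>c\<in>mcycles src tgt n. F (rflip ie c))"
proof -
  have im: "rflip ie ` mcycles src tgt n = mcycles src tgt n"
  proof
    show "rflip ie ` mcycles src tgt n \<subseteq> mcycles src tgt n" using rflip_mcycles[OF n] by auto
    show "mcycles src tgt n \<subseteq> rflip ie ` mcycles src tgt n"
    proof
      fix c assume "c \<in> mcycles src tgt n"
      then have "rflip ie c \<in> mcycles src tgt n" using rflip_mcycles[OF n] by auto
      then show "c \<in> rflip ie ` mcycles src tgt n" by (metis rflip_rflip image_eqI)
    qed
  qed
  have inj: "inj_on (rflip ie) (mcycles src tgt n)"
    by (metis inj_onI rflip_rflip)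
  show ?thesis
    using sum.reindex[OF inj, of F] im by simp
qed

end

context qgb
begin

lemma closed_flux_int:
  assumes mag1: "magnetic_pot ie a1" and mag2: "magnetic_pot ie a2"
    and hyp: "\<forall>s<m. \<exists>q::int. flux a1 (c0 s) - flux a2 (c0 s) = 2 * pi * real_of_int q"
    and c: "wpath src tgt c x x"
  shows "\<exists>q::int. walksum (\<lambda>e. a1 e - a2 e - ip (tau e) (\<chi> j. flux a1 (cd j) - flux a2 (cd j))) c
            = 2 * pi * real_of_int q"
proof -
  define t where "t = (\<chi> j. flux a1 (cd j) - flux a2 (cd j))"
  define beta where "beta = (\<lambda>e. a1 e - a2 e - ip (tau e) t)"
  have magb: "magnetic_pot ie beta"
    using mag1 mag2 by (simp add: magnetic_pot_def beta_def ip_neg)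
  have fb: "flux beta f = flux a1 f - flux a2 f - (\<Sum>j\<in>UNIV. t $ j * real_of_int (tau_chain tau f $ j))"
    if af: "\<forall>e. f (ie e) = - f e" for f
  proof -
    have "flux beta f = flux a1 f - flux a2 f - flux (\<lambda>e. ip (tau e) t) f"
      unfolding beta_def by (simp add: flux_alpha_diff)
    also have "flux (\<lambda>e. ip (tau e) t) f = (\<Sum>j\<in>UNIV. t $ j * real_of_int (tau_chain tau f $ j))"
      unfolding flux_ip Lv_tau_chain[OF af] by (simp add: sum_divide_distrib)
    finally show ?thesis .
  qed
  have fcd: "flux beta (cd i) = 0" for i
  proof -
    have "\<forall>e. cd i (ie e) = - cd i e" using cd_cyc by (simp add: cycle_space_def)
    then have "flux beta (cd i) = flux a1 (cd i) - flux a2 (cd i) - (\<Sum>j\<in>UNIV. t $ j * real_of_int (axis i 1 $ j))"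
      using fb tau_cd by simp
    also have "(\<Sum>j\<in>UNIV. t $ j * real_of_int (axis i (1::int) $ j)) = t $ i"
      by (simp add: axis_def if_distrib cong: if_cong)
    finally show ?thesis by (simp add: t_def)
  qed
  have "\<forall>s. \<exists>q::int. s < m \<longrightarrow> flux a1 (c0 s) - flux a2 (c0 s) = 2 * pi * real_of_int q"
    using hyp by blast
  then obtain Q where Q: "\<forall>s. s < m \<longrightarrow> flux a1 (c0 s) - flux a2 (c0 s) = 2 * pi * real_of_int (Q s :: int)"
    by (metis choice)
  have fc0: "flux beta (c0 s) = 2 * pi * real_of_int (Q s)" if s: "s < m" for s
  proof -
    have "\<forall>e. c0 s (ie e) = - c0 s e" using c0_cyc s by (simp add: cycle_space_def)
    then show ?thesis using fb tau_c0 s Q by simp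
  qed
  obtain a b where z: "walk_chain ie c = combo cd c0 m a b"
    using walk_decomp[OF c] by blast
  have "walksum beta c = flux beta (walk_chain ie c)" by (simp add: flux_walk[OF magb])
  also have "\<dots> = (\<Sum>s<m. real_of_int (b s) * (2 * pi * real_of_int (Q s)))"
    unfolding z flux_combo by (simp add: fcd fc0)
  also have "\<dots> = 2 * pi * real_of_int (\<Sum>s<m. b s * Q s)"
    by (simp add: sum_distrib_left mult_ac)
  finally show ?thesis unfolding beta_def t_def by blast
qed

lemma gauge_exists:
  assumes mag1: "magnetic_pot ie a1" and mag2: "magnetic_pot ie a2"
    and hyp: "\<forall>s<m. \<exists>q::int. flux a1 (c0 s) - flux a2 (c0 s) = 2 * pi * real_of_int q"
    and conn: "\<forall>x y. (x, y) \<in> (range (\<lambda>e. (src e, tgt e)))\<^sup>*"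
  shows "\<exists>g t. \<forall>e. \<exists>q::int. a1 e = a2 e + g (tgt e) - g (src e) + ip (tau e) t + 2 * pi * real_of_int q"
proof -
  define t where "t = (\<chi> j. flux a1 (cd j) - flux a2 (cd j))"
  define beta where "beta = (\<lambda>e. a1 e - a2 e - ip (tau e) t)"
  have magb: "magnetic_pot ie beta"
    using mag1 mag2 by (simp add: magnetic_pot_def beta_def ip_neg)
  define x0 :: 'v where "x0 = undefined"
  define W where "W = (\<lambda>x. SOME c. wpath src tgt c x0 x)"
  have W: "wpath src tgt (W x) x0 x" for x
    unfolding W_def using conn_walk[of x0 x] conn by (metis someI_ex)
  define g where "g = (\<lambda>x. walksum beta (W x))"
  have "\<exists>q::int. a1 e = a2 e + g (tgt e) - g (src e) + ip (tau e) t + 2 * pi * real_of_int q" for e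
  proof -
    let ?c = "W (src e) @ [Inl e] @ rflip ie (W (tgt e))"
    have "wpath src tgt ?c x0 x0"
      using W[of "src e"] wpath_rflip[OF W[of "tgt e"]]
      by (auto simp: wpath_append ssrc_def stgt_def)
    then obtain q :: int where q: "walksum beta ?c = 2 * pi * real_of_int q"
      using closed_flux_int[OF mag1 mag2 hyp] unfolding beta_def t_def by blast
    have "walksum beta ?c = g (src e) + beta e - g (tgt e)"
      by (simp add: walksum_append walksum_Cons walksum_rflip[OF magb] g_def)
    then show ?thesis using q by (intro exI[of _ q]) (simp add: beta_def)
  qed
  then show ?thesis by blast
qed

end



lemma sum_half: "(\<Sum>c\<in>S. (X c + Y c) / 2) = ((\<Sum>c\<in>S. X c) + (\<Sum>c\<in>S. Y c)) / (2::complex)"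
  by (simp only: sum_divide_distrib[symmetric] sum.distrib)

lemma exp_split: "exp (- \<i> * complex_of_real (a + b)) = exp (- \<i> * complex_of_real a) * exp (- \<i> * complex_of_real b)"
proof -
  have "- \<i> * complex_of_real (a + b) = - \<i> * complex_of_real a + - \<i> * complex_of_real b"
    by (simp add: algebra_simps)
  then show ?thesis by (simp only: exp_add)
qed

lemma rvec_add: "rvec (a + b) = rvec a + rvec b"
  by (simp add: rvec_def vec_eq_iff)

lemma rvec_zero[simp]: "rvec 0 = 0"
  by (simp add: rvec_def vec_eq_iff)

lemma walk_tau_bound:
  assumes T: "\<forall>e. norm (rvec (tau e)) \<le> T" and T0: "0 \<le> T"
  shows "norm (rvec (walk_tau tau c)) \<le> real (length c) * T"
proof (induct c)
  case Nil then show ?case by (simp add: walk_tau_def)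
next
  case (Cons s c)
  have wt: "walk_tau tau (s # c) = (case s of Inl e \<Rightarrow> tau e | Inr x \<Rightarrow> 0) + walk_tau tau c"
    by (simp add: walk_tau_def)
  have p: "norm (rvec (case s of Inl e \<Rightarrow> tau e | Inr x \<Rightarrow> 0)) \<le> T"
    using T T0 by (cases s) auto
  have "norm (rvec (walk_tau tau (s # c))) \<le> norm (rvec (case s of Inl e \<Rightarrow> tau e | Inr x \<Rightarrow> 0)) + norm (rvec (walk_tau tau c))"
    unfolding wt rvec_add by (rule norm_triangle_ineq)
  also have "\<dots> \<le> T + real (length c) * T" using p Cons by simp
  finally show ?case by (simp add: algebra_simps)
qed

lemma finite_bounded_int: "finite {mm :: int^'d::finite. norm (rvec mm) \<le> R}"
proof -
  define N where "N = \<lceil>R\<rceil>"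
  have sub: "{mm :: int^'d. norm (rvec mm) \<le> R} \<subseteq> vec_lambda ` (PiE UNIV (\<lambda>_. {-N..N}))"
  proof
    fix mm :: "int^'d" assume "mm \<in> {mm. norm (rvec mm) \<le> R}"
    then have R: "norm (rvec mm) \<le> R" by simp
    have "\<bar>mm $ j\<bar> \<le> N" for j
    proof -
      have "\<bar>real_of_int (mm $ j)\<bar> \<le> R"
        using component_le_norm_cart[of "rvec mm" j] R by (simp add: rvec_def)
      then have "\<lceil>real_of_int \<bar>mm $ j\<bar>\<rceil> \<le> N" unfolding N_def by (intro ceiling_mono) simp
      then show ?thesis by (metis ceiling_of_int of_int_abs)
    qed
    then have "(\<lambda>j. mm $ j) \<in> PiE UNIV (\<lambda>_. {-N..N})"
      by (auto simp: PiE_UNIV_domain abs_le_iff) (metis minus_le_iff)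
    then show "mm \<in> vec_lambda ` (PiE UNIV (\<lambda>_. {-N..N}))"
      by (metis image_eqI vec_lambda_eta)
  qed
  show ?thesis
    by (rule finite_subset[OF sub]) (intro finite_imageI finite_PiE; simp)
qed

theorem corollary3p7:
  fixes src tgt :: "'e::finite \<Rightarrow> 'v::finite" and ie :: "'e \<Rightarrow> 'e"
    and tau :: "'e \<Rightarrow> int^'d::finite" and alpha :: "'e \<Rightarrow> real" and V :: "'v \<Rightarrow> real"
    and cd :: "'d \<Rightarrow> 'e \<Rightarrow> int" and c0 :: "nat \<Rightarrow> 'e \<Rightarrow> int" and m :: nat
  assumes G: "quot_graph src tgt ie tau"
    and mag: "magnetic_pot ie alpha"
    and cd_cyc: "\<forall>j. cd j \<in> cycle_space tgt ie"
    and c0_cyc: "\<forall>s<m. c0 s \<in> cycle_space tgt ie"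
    and span: "\<forall>z\<in>cycle_space tgt ie. \<exists>a b. z = combo cd c0 m a b"
    and indep: "\<forall>a b. combo cd c0 m a b = (\<lambda>_. 0) \<longrightarrow> (\<forall>j. a j = 0) \<and> (\<forall>s<m. b s = 0)"
    and card_basis: "int (CARD('d) + m) = betti src"
    and tau_cd: "\<forall>j. tau_chain tau (cd j) = axis j 1"
    and tau_c0: "\<forall>s<m. tau_chain tau (c0 s) = 0"
    and c0_basis_C0: "\<forall>z\<in>cycle_space tgt ie. tau_chain tau z = 0 \<longrightarrow>
                         (\<exists>b. z = (\<lambda>e. \<Sum>s<m. b s * c0 s e))"
  defines "ko \<equiv> (\<chi> j. - flux alpha (cd j))"
    and "phio \<equiv> (\<lambda>c k. flux alpha (Pproj cd c0 m (walk_chain ie c)) + ip (walk_tau tau c) k)"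
    and "tauplus \<equiv> Max (range (\<lambda>e. norm (rvec (tau e))))"
  shows
    "(\<forall>n\<ge>1. \<forall>k. trace (mat_pow (Hfib src tgt tau alpha V (k + ko)) n)
          = (\<Sum>c\<in>mcycles src tgt n. complex_of_real (omega src V c) * exp (- \<i> * complex_of_real (phio c k)))
      \<and> trace (mat_pow (Hfib src tgt tau alpha V (k + ko)) n)
          = (\<Sum>c\<in>mcycles src tgt n. complex_of_real (omega src V c * cos (phio c k)))
      \<and> trace (mat_pow (Hfib src tgt tau alpha V (k + ko)) n)
          = (\<Sum>mm\<in>{mm :: int^'d. norm (rvec mm) \<le> real n * tauplus}.
               (\<Sum>c\<in>{c\<in>mcycles src tgt n. walk_tau tau c = mm}.
                  complex_of_real (omega src V c)
                  * exp (- \<i> * complex_of_real (flux alpha (Pproj cd c0 m (walk_chain ie c)))))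
               * exp (- \<i> * complex_of_real (ip mm k))))
   \<and> (betti src = int CARD('d) \<longrightarrow>
        (\<forall>z\<in>cycle_space tgt ie. Pproj cd c0 m z = (\<lambda>_. 0))
      \<and> (\<forall>n\<ge>1. \<forall>k. trace (mat_pow (Hfib src tgt tau alpha V (k + ko)) n)
                  = trace (mat_pow (Hfib src tgt tau (\<lambda>_. 0) V k) n)))
   \<and> (\<forall>alpha1 alpha2. magnetic_pot ie alpha1 \<longrightarrow> magnetic_pot ie alpha2 \<longrightarrow>
        (\<forall>s<m. \<exists>q::int. flux alpha1 (c0 s) - flux alpha2 (c0 s) = 2 * pi * real_of_int q) \<longrightarrow>
        spec_H src tgt tau alpha1 V = spec_H src tgt tau alpha2 V)"
proof -
  have GG: "(\<forall>e. ie (ie e) = e \<and> ie e \<noteq> e \<and> src (ie e) = tgt e \<and> tau (ie e) = - tau e) \<and>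
     (\<forall>x y. (x, y) \<in> (range (\<lambda>e. (src e, tgt e)))\<^sup>*)"
    using G unfolding quot_graph_def .
  have g1: "\<forall>e. ie (ie e) = e \<and> ie e \<noteq> e \<and> src (ie e) = tgt e \<and> tau (ie e) = - tau e"
    using GG by (rule conjunct1)
  have conn: "\<forall>x y. (x, y) \<in> (range (\<lambda>e. (src e, tgt e)))\<^sup>*"
    using GG by (rule conjunct2)
  interpret Q: qgb src tgt ie tau cd c0 m
    apply unfold_locales
             apply (simp add: g1)
            apply (simp add: g1)
           apply (simp add: g1)
          apply (simp add: g1)
         apply (rule cd_cyc)
        apply (rule c0_cyc)
       apply (rule span)
      apply (rule indep)
     apply (rule tau_cd)
    apply (rule tau_c0)
    done
  let ?T = "\<lambda>n k. trace (mat_pow (Hfib src tgt tau alpha V (k + ko)) n)"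
  have ph: "walksum alpha c + ip (walk_tau tau c) (k + ko) = phio c k"
    if n: "n \<ge> 1" and c: "c \<in> mcycles src tgt n" for n c k
  proof -
    obtain x where x: "wpath src tgt c x x" using c unfolding mcycles_char2[OF n] by blast
    have e1: "walksum alpha c + ip (walk_tau tau c) ko = flux alpha (Pproj cd c0 m (walk_chain ie c))"
      using Q.phase_eq[OF mag x] unfolding ko_def .
    show ?thesis unfolding phio_def ip_add2 using e1 by linarith
  qed
  have A: "?T n k = (\<Sum>c\<in>mcycles src tgt n. complex_of_real (omega src V c) * exp (\<i> * complex_of_real (phio c k)))"
    if n: "n \<ge> 1" for n k
    unfolding trace_formula[OF n] using ph[OF n] by (intro sum.cong) auto
  have phr: "phio (rflip ie c) k = - phio c k" if n: "n \<ge> 1" and c: "c \<in> mcycles src tgt n" for n c k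
  proof -
    have "phio (rflip ie c) k = walksum alpha (rflip ie c) + ip (walk_tau tau (rflip ie c)) (k + ko)"
      using ph[OF n Q.rflip_mcycles[OF n c]] by simp
    also have "\<dots> = - (walksum alpha c + ip (walk_tau tau c) (k + ko))"
      by (simp add: Q.walksum_rflip[OF mag] Q.walk_tau_rflip ip_neg)
    finally show ?thesis using ph[OF n c] by simp
  qed
  have B: "?T n k = (\<Sum>c\<in>mcycles src tgt n. complex_of_real (omega src V c) * exp (- \<i> * complex_of_real (phio c k)))"
    if n: "n \<ge> 1" for n k
  proof -
    have "?T n k = (\<Sum>c\<in>mcycles src tgt n. complex_of_real (omega src V (rflip ie c)) * exp (\<i> * complex_of_real (phio (rflip ie c) k)))"
      unfolding A[OF n] by (rule Q.sum_rflip[OF n])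
    also have "\<dots> = (\<Sum>c\<in>mcycles src tgt n. complex_of_real (omega src V c) * exp (- \<i> * complex_of_real (phio c k)))"
      by (intro sum.cong refl) (simp add: phr[OF n] Q.omega_rflip)
    finally show ?thesis .
  qed
  have C: "?T n k = (\<Sum>c\<in>mcycles src tgt n. complex_of_real (omega src V c * cos (phio c k)))"
    if n: "n \<ge> 1" for n k
  proof -
    have "(\<Sum>c\<in>mcycles src tgt n. complex_of_real (omega src V c * cos (phio c k)))
       = (\<Sum>c\<in>mcycles src tgt n. (complex_of_real (omega src V c) * exp (\<i> * complex_of_real (phio c k))
            + complex_of_real (omega src V c) * exp (- \<i> * complex_of_real (phio c k))) / 2)"
      by (intro sum.cong refl) (simp add: cos_of_real[symmetric] cos_exp_eq distrib_left)
    also have "\<dots> = (?T n k + ?T n k) / 2"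
      by (simp only: sum_half A[OF n, symmetric] B[OF n, symmetric])
    finally show ?thesis by simp
  qed
  have Dq: "?T n k = (\<Sum>mm\<in>{mm :: int^'d. norm (rvec mm) \<le> real n * tauplus}.
               (\<Sum>c\<in>{c\<in>mcycles src tgt n. walk_tau tau c = mm}.
                  complex_of_real (omega src V c)
                  * exp (- \<i> * complex_of_real (flux alpha (Pproj cd c0 m (walk_chain ie c)))))
               * exp (- \<i> * complex_of_real (ip mm k)))"
    if n: "n \<ge> 1" for n k
  proof -
    let ?S = "{mm :: int^'d. norm (rvec mm) \<le> real n * tauplus}"
    let ?h = "\<lambda>c. complex_of_real (omega src V c)
                  * exp (- \<i> * complex_of_real (flux alpha (Pproj cd c0 m (walk_chain ie c))))
               * exp (- \<i> * complex_of_real (ip (walk_tau tau c) k))"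
    have fin: "finite (range (\<lambda>e. norm (rvec (tau e))))" by simp
    have Tb: "\<forall>e. norm (rvec (tau e)) \<le> tauplus"
      unfolding tauplus_def using fin by (auto intro: Max_ge)
    have T0: "0 \<le> tauplus"
      using Tb[rule_format, of undefined] norm_ge_zero order_trans by blast
    have img: "walk_tau tau ` mcycles src tgt n \<subseteq> ?S"
    proof
      fix mm assume "mm \<in> walk_tau tau ` mcycles src tgt n"
      then obtain c where c: "c \<in> mcycles src tgt n" and mm: "mm = walk_tau tau c" by blast
      have "length c = n" using c by (simp add: mcycles_def)
      then show "mm \<in> ?S" using walk_tau_bound[OF Tb T0, of c] mm by simp
    qed
    have "?T n k = (\<Sum>c\<in>mcycles src tgt n. ?h c)"
      unfolding B[OF n] phio_def exp_split
      by (simp add: mult.assoc)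
    also have "\<dots> = (\<Sum>mm\<in>?S. \<Sum>c\<in>{c\<in>mcycles src tgt n. walk_tau tau c = mm}. ?h c)"
      by (rule sum.group[symmetric]) (auto simp: finite_mcycles finite_bounded_int img)
    also have "\<dots> = (\<Sum>mm\<in>?S.
               (\<Sum>c\<in>{c\<in>mcycles src tgt n. walk_tau tau c = mm}.
                  complex_of_real (omega src V c)
                  * exp (- \<i> * complex_of_real (flux alpha (Pproj cd c0 m (walk_chain ie c)))))
               * exp (- \<i> * complex_of_real (ip mm k)))"
      unfolding sum_distrib_right by (intro sum.cong refl) auto
    finally show ?thesis .
  qed
  have part1: "\<forall>n\<ge>1. \<forall>k. ?T n k
          = (\<Sum>c\<in>mcycles src tgt n. complex_of_real (omega src V c) * exp (- \<i> * complex_of_real (phio c k)))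
      \<and> ?T n k = (\<Sum>c\<in>mcycles src tgt n. complex_of_real (omega src V c * cos (phio c k)))
      \<and> ?T n k = (\<Sum>mm\<in>{mm :: int^'d. norm (rvec mm) \<le> real n * tauplus}.
               (\<Sum>c\<in>{c\<in>mcycles src tgt n. walk_tau tau c = mm}.
                  complex_of_real (omega src V c)
                  * exp (- \<i> * complex_of_real (flux alpha (Pproj cd c0 m (walk_chain ie c)))))
               * exp (- \<i> * complex_of_real (ip mm k)))"
    using B C Dq by blast
  have part2: "betti src = int CARD('d) \<longrightarrow>
        (\<forall>z\<in>cycle_space tgt ie. Pproj cd c0 m z = (\<lambda>_. 0))
      \<and> (\<forall>n\<ge>1. \<forall>k. ?T n k = trace (mat_pow (Hfib src tgt tau (\<lambda>_. 0) V k) n))"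
  proof
    assume "betti src = int CARD('d)"
    then have m0: "m = 0" using card_basis by simp
    have P0: "\<forall>z\<in>cycle_space tgt ie. Pproj cd c0 m z = (\<lambda>_. 0)"
    proof
      fix z assume "z \<in> cycle_space tgt ie"
      then obtain a b where "z = combo cd c0 m a b" using span by blast
      then show "Pproj cd c0 m z = (\<lambda>_. 0)" using Q.Pproj_eq m0 by simp
    qed
    have "?T n k = trace (mat_pow (Hfib src tgt tau (\<lambda>_. 0) V k) n)" if n: "n \<ge> 1" for n k
    proof -
      have phz: "phio c k = ip (walk_tau tau c) k" if c: "c \<in> mcycles src tgt n" for c
      proof -
        obtain x where x: "wpath src tgt c x x" using c unfolding mcycles_char2[OF n] by blast
        have "Pproj cd c0 m (walk_chain ie c) = (\<lambda>_. 0)" using P0 Q.walk_chain_cycle[OF x] by blast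
        then show ?thesis by (simp add: phio_def flux_def)
      qed
      have "?T n k = (\<Sum>c\<in>mcycles src tgt n. complex_of_real (omega src V c) * exp (- \<i> * complex_of_real (ip (walk_tau tau c) k)))"
        unfolding B[OF n] by (intro sum.cong refl) (simp add: phz)
      also have "\<dots> = (\<Sum>c\<in>mcycles src tgt n. complex_of_real (omega src V (rflip ie c)) * exp (\<i> * complex_of_real (ip (walk_tau tau (rflip ie c)) k)))"
        by (intro sum.cong refl) (simp add: Q.omega_rflip Q.walk_tau_rflip ip_neg)
      also have "\<dots> = (\<Sum>c\<in>mcycles src tgt n. complex_of_real (omega src V c) * exp (\<i> * complex_of_real (ip (walk_tau tau c) k)))"
        by (rule Q.sum_rflip[OF n, symmetric])
      also have "\<dots> = trace (mat_pow (Hfib src tgt tau (\<lambda>_. 0) V k) n)"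
        unfolding trace_formula[OF n] by (simp add: walksum_zero)
      finally show ?thesis .
    qed
    then show "(\<forall>z\<in>cycle_space tgt ie. Pproj cd c0 m z = (\<lambda>_. 0))
      \<and> (\<forall>n\<ge>1. \<forall>k. ?T n k = trace (mat_pow (Hfib src tgt tau (\<lambda>_. 0) V k) n))"
      using P0 by blast
  qed
  have part3: "\<forall>alpha1 alpha2. magnetic_pot ie alpha1 \<longrightarrow> magnetic_pot ie alpha2 \<longrightarrow>
        (\<forall>s<m. \<exists>q::int. flux alpha1 (c0 s) - flux alpha2 (c0 s) = 2 * pi * real_of_int q) \<longrightarrow>
        spec_H src tgt tau alpha1 V = spec_H src tgt tau alpha2 V"
  proof (intro allI impI)
    fix alpha1 alpha2 assume m1: "magnetic_pot ie alpha1" and m2: "magnetic_pot ie alpha2"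
      and h: "\<forall>s<m. \<exists>q::int. flux alpha1 (c0 s) - flux alpha2 (c0 s) = 2 * pi * real_of_int q"
    have h': "\<forall>s<m. \<exists>q::int. flux alpha2 (c0 s) - flux alpha1 (c0 s) = 2 * pi * real_of_int q"
    proof (intro allI impI)
      fix s assume "s < m"
      then obtain q :: int where "flux alpha1 (c0 s) - flux alpha2 (c0 s) = 2 * pi * real_of_int q" using h by blast
      then show "\<exists>q::int. flux alpha2 (c0 s) - flux alpha1 (c0 s) = 2 * pi * real_of_int q"
        by (intro exI[of _ "- q"]) simp
    qed
    obtain g t where gt: "\<forall>e. \<exists>q::int. alpha1 e = alpha2 e + g (tgt e) - g (src e) + ip (tau e) t + 2 * pi * real_of_int q"
      using Q.gauge_exists[OF m1 m2 h conn] by blast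
    obtain g' t' where gt': "\<forall>e. \<exists>q::int. alpha2 e = alpha1 e + g' (tgt e) - g' (src e) + ip (tau e) t' + 2 * pi * real_of_int q"
      using Q.gauge_exists[OF m2 m1 h' conn] by blast
    show "spec_H src tgt tau alpha1 V = spec_H src tgt tau alpha2 V"
      using spec_H_gauge[OF gt] spec_H_gauge[OF gt'] by blast
  qed
  show ?thesis using part1 part2 part3 by blast
qed


end
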